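(* Let $\sigma$ be a pre-weight function and $\mathfrak{M}_\sigma=\{S^{(x)}:x>0\}$ its associated weight matrix. For $k\in\mathbb{N}_{\ge1}$ let $\Lambda^k=\{a\in\mathbb{C}^{\mathbb{N}}:\sup_{j\in\mathbb{N}}|a_j|/(k^jS^{(k)}_j)<\infty\}$, a Banach space with this supremum as norm. Then the inclusion $\Lambda^k\hookrightarrow\Lambda^{k+1}$ is compact. In particular, $\Lambda^{\{\mathfrak{M}_\sigma\}}=\operatorname{ind}_{k}\Lambda^k$ (the inductive limit) is a (DFS)-space.
   Context: A pre-weight function is a continuous increasing $\sigma:[0,\infty)\to[0,\infty)$ with $\sigma(0)=0$, $\sigma(t)\to\infty$, $\log t=o(\sigma(t))$, $t\mapsto\sigma(e^t)$ convex. $\varphi^*_\sigma(x)=\sup_{y\ge0}(xy-\sigma(e^y))$, and $S^{(x)}_j=\exp(\frac1x\varphi^*_\sigma(xj))$. A (DFS)-space is a countable inductive limit of Banach spaces with compact connecting maps. *)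

theory Defs
  imports "HOL-Analysis.Analysis" "HOL-Library.Landau_Symbols"
begin

definition pre_weight :: "(real \<Rightarrow> real) \<Rightarrow> bool" where
  "pre_weight \<sigma> \<longleftrightarrow>
     continuous_on {0..} \<sigma> \<and>
     mono_on {0..} \<sigma> \<and>
     (\<forall>t\<ge>0. \<sigma> t \<ge> 0) \<and>
     \<sigma> 0 = 0 \<and>
     filterlim \<sigma> at_top at_top \<and>
     (\<lambda>t. ln t) \<in> o[at_top](\<sigma>) \<and>
     convex_on UNIV (\<lambda>t. \<sigma> (exp t))"

definition phi_star :: "(real \<Rightarrow> real) \<Rightarrow> real \<Rightarrow> real" where
  "phi_star \<sigma> x = (SUP y\<in>{0..}. x * y - \<sigma> (exp y))"

definition S_seq :: "(real \<Rightarrow> real) \<Rightarrow> real \<Rightarrow> nat \<Rightarrow> real" where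
  "S_seq \<sigma> x j = exp ((1 / x) * phi_star \<sigma> (x * real j))"

definition Lweight :: "(real \<Rightarrow> real) \<Rightarrow> nat \<Rightarrow> nat \<Rightarrow> real" where
  "Lweight \<sigma> k j = real k ^ j * S_seq \<sigma> (real k) j"

definition Lambda :: "(real \<Rightarrow> real) \<Rightarrow> nat \<Rightarrow> (nat \<Rightarrow> complex) set" where
  "Lambda \<sigma> k = {a. bdd_above (range (\<lambda>j. cmod (a j) / Lweight \<sigma> k j))}"

definition Lnorm :: "(real \<Rightarrow> real) \<Rightarrow> nat \<Rightarrow> (nat \<Rightarrow> complex) \<Rightarrow> real" where
  "Lnorm \<sigma> k a = (SUP j. cmod (a j) / Lweight \<sigma> k j)"

definition compact_inclusion :: "(real \<Rightarrow> real) \<Rightarrow> nat \<Rightarrow> nat \<Rightarrow> bool" where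
  "compact_inclusion \<sigma> k l \<longleftrightarrow>
     Lambda \<sigma> k \<subseteq> Lambda \<sigma> l \<and>
     (\<forall>u :: nat \<Rightarrow> nat \<Rightarrow> complex.
        (\<forall>n. u n \<in> Lambda \<sigma> k) \<and> (\<exists>B. \<forall>n. Lnorm \<sigma> k (u n) \<le> B) \<longrightarrow>
        (\<exists>r b. strict_mono r \<and> b \<in> Lambda \<sigma> l \<and>
               (\<lambda>n. Lnorm \<sigma> l (\<lambda>j. u (r n) j - b j)) \<longlonglongrightarrow> 0))"

end

theory Submission
  imports Defs "HOL-Library.Diagonal_Subsequence"
begin

lemma phi_bdd:
  assumes pw: "pre_weight \<sigma>" and x: "x \<ge> 0"
  shows "bdd_above ((\<lambda>y. x * y - \<sigma> (exp y)) ` {0..})"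
proof (cases "x = 0")
  case True
  have "\<sigma> (exp y) \<ge> 0" for y using pw unfolding pre_weight_def by auto
  then show ?thesis using True by (intro bdd_aboveI[of _ 0]) auto
next
  case False
  then have xp: "x > 0" using x by simp
  have nn: "\<And>t. t \<ge> 0 \<Longrightarrow> \<sigma> t \<ge> 0" using pw unfolding pre_weight_def by auto
  have "(\<lambda>t. ln t) \<in> o[at_top](\<sigma>)" using pw unfolding pre_weight_def by auto
  from landau_o.smallD[OF this, of "1/x"] xp
  have "\<forall>\<^sub>F t in at_top. norm (ln t) \<le> (1/x) * norm (\<sigma> t)" by simp
  then obtain T where T: "\<And>t. t \<ge> T \<Longrightarrow> norm (ln t) \<le> (1/x) * norm (\<sigma> t)"
    by (auto simp: eventually_at_top_linorder)
  define T' where "T' = max T 1"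
  have T'p: "T' > 0" "T' \<ge> T" unfolding T'_def by auto
  show ?thesis
  proof (rule bdd_aboveI[of _ "x * ln T'"])
    fix z assume "z \<in> (\<lambda>y. x * y - \<sigma> (exp y)) ` {0..}"
    then obtain y where y: "y \<ge> 0" "z = x * y - \<sigma> (exp y)" by auto
    have s0: "\<sigma> (exp y) \<ge> 0" using nn by simp
    have l0: "ln T' \<ge> 0" unfolding T'_def by simp
    show "z \<le> x * ln T'"
    proof (cases "y \<ge> ln T'")
      case True
      then have "exp y \<ge> T'" using T'p by (metis exp_le_cancel_iff exp_ln)
      then have "norm (ln (exp y)) \<le> (1/x) * norm (\<sigma> (exp y))" using T[of "exp y"] T'p by simp
      then have "y \<le> (1/x) * \<sigma> (exp y)" using s0 y by simp
      then have "x * y \<le> \<sigma> (exp y)" using xp by (simp add: field_simps)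
      moreover have "x * ln T' \<ge> 0" using xp l0 by simp
      ultimately show ?thesis using y by linarith
    next
      case False
      then have "x * y \<le> x * ln T'" using xp by (intro mult_left_mono) auto
      then show ?thesis using y s0 by simp
    qed
  qed
qed

lemma S_mono:
  assumes pw: "pre_weight \<sigma>" and k: "k \<ge> (1::nat)"
  shows "S_seq \<sigma> (real k) j \<le> S_seq \<sigma> (real (k+1)) j"
proof -
  have nn: "\<And>t. t \<ge> 0 \<Longrightarrow> \<sigma> t \<ge> 0" using pw unfolding pre_weight_def by auto
  let ?b = "phi_star \<sigma> (real (k+1) * real j)"
  have bdd: "bdd_above ((\<lambda>y. real (k+1) * real j * y - \<sigma> (exp y)) ` {0..})"
    by (rule phi_bdd[OF pw]) simp
  have kp: "real k > 0" using k by simp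
  have "phi_star \<sigma> (real k * real j) \<le> real k / real (k+1) * ?b"
    unfolding phi_star_def[of \<sigma> "real k * real j"]
  proof (rule cSUP_least)
    fix y :: real assume y: "y \<in> {0..}"
    have "real (k+1) * real j * y - \<sigma> (exp y) \<le> ?b"
      unfolding phi_star_def by (rule cSUP_upper[OF y bdd])
    then have "real k / real (k+1) * (real (k+1) * real j * y - \<sigma> (exp y))
       \<le> real k / real (k+1) * ?b" by (intro mult_left_mono) auto
    moreover have "real k * real j * y - \<sigma> (exp y) \<le>
       real k / real (k+1) * (real (k+1) * real j * y - \<sigma> (exp y))"
    proof -
      have "real k / real (k+1) * \<sigma> (exp y) \<le> 1 * \<sigma> (exp y)"
        using nn[of "exp y"] by (intro mult_right_mono) auto
      then show ?thesis by (simp add: field_simps)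
    qed
    ultimately show "real k * real j * y - \<sigma> (exp y) \<le> real k / real (k+1) * ?b" by linarith
  qed auto
  then have "(1 / real k) * phi_star \<sigma> (real k * real j) \<le> (1 / real (k+1)) * ?b"
    using kp by (simp add: field_simps)
  then show ?thesis unfolding S_seq_def by (rule exp_le_cancel_iff[THEN iffD2])
qed

lemma Lweight_pos: "k \<ge> 1 \<Longrightarrow> Lweight \<sigma> k j > 0"
  unfolding Lweight_def S_seq_def by simp

lemma Lweight_le:
  assumes pw: "pre_weight \<sigma>" and k: "k \<ge> (1::nat)"
  shows "Lweight \<sigma> k j \<le> (real k / real (k+1)) ^ j * Lweight \<sigma> (k+1) j"
proof -
  have "Lweight \<sigma> k j = real k ^ j * S_seq \<sigma> (real k) j" unfolding Lweight_def ..
  also have "\<dots> \<le> real k ^ j * S_seq \<sigma> (real (k+1)) j"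
    by (intro mult_left_mono S_mono[OF pw k]) auto
  also have "\<dots> = (real k / real (k+1)) ^ j * Lweight \<sigma> (k+1) j"
    unfolding Lweight_def by (simp add: power_divide)
  finally show ?thesis .
qed

lemma compact_gen:
  fixes w v :: "nat \<Rightarrow> real" and u :: "nat \<Rightarrow> nat \<Rightarrow> complex"
  assumes wpos: "\<And>j. w j > 0" and vpos: "\<And>j. v j > 0"
    and q: "0 \<le> q" "q < 1" and wv: "\<And>j. w j \<le> q ^ j * v j"
    and ub: "\<And>n j. cmod (u n j) \<le> B * w j"
  shows "\<exists>r b. strict_mono r \<and> bdd_above (range (\<lambda>j. cmod (b j) / v j)) \<and>
           (\<lambda>n. SUP j. cmod (u (r n) j - b j) / v j) \<longlonglongrightarrow> 0"
proof -
  have B0: "B \<ge> 0"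
  proof -
    have "0 \<le> B * w 0" using ub[of 0 0] norm_ge_zero[of "u 0 0"] by linarith
    then show ?thesis using wpos[of 0] by (simp add: zero_le_mult_iff)
  qed
  let ?P = "\<lambda>j. \<lambda>s. convergent (\<lambda>n. u (s n) j)"
  interpret nat: subseqs ?P
  proof (unfold convergent_def, unfold subseqs_def, auto)
    fix j :: nat and s :: "nat \<Rightarrow> nat" assume s: "strict_mono s"
    have "bounded (range (\<lambda>n. u (s n) j))"
      unfolding bounded_iff using ub by blast
    from bounded_imp_convergent_subsequence[OF this]
    obtain l r where "strict_mono r" "((\<lambda>n. u (s n) j) \<circ> r) \<longlonglongrightarrow> l" by blast
    thus "\<exists>s'. strict_mono (s'::nat\<Rightarrow>nat) \<and> (\<exists>l. (\<lambda>n. u (s (s' n)) j) \<longlonglongrightarrow> l)"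
      by (auto simp: comp_def)
  qed
  define d where "d = nat.diagseq"
  have subseq: "strict_mono d"
    unfolding d_def using nat.subseq_diagseq by auto
  have cnv: "?P j d" for j
  proof -
    have Pn_seqseq: "?P j (nat.seqseq (Suc j))"
      by (rule nat.seqseq_holds)
    have 1: "(\<lambda>n. u ((nat.seqseq (Suc j) \<circ> (\<lambda>k. nat.fold_reduce (Suc j) k
      (Suc j + k))) n) j) = (\<lambda>n. u (nat.seqseq (Suc j) n) j) \<circ>
      (\<lambda>k. nat.fold_reduce (Suc j) k (Suc j + k))"
      by auto
    have 2: "?P j (d \<circ> ((+) (Suc j)))"
      unfolding d_def nat.diagseq_seqseq 1
      by (intro convergent_subseq_convergent Pn_seqseq nat.subseq_diagonal_rest)
    then obtain L where 3: "(\<lambda>na. u (d (na + Suc j)) j) \<longlonglongrightarrow> L"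
      by (auto simp: add.commute dest: convergentD)
    then have "(\<lambda>n. u (d n) j) \<longlonglongrightarrow> L"
      by (rule LIMSEQ_offset)
    then show ?thesis
      by (auto simp: convergent_def)
  qed
  define b where "b j = lim (\<lambda>n. u (d n) j)" for j
  have lim: "(\<lambda>n. u (d n) j) \<longlonglongrightarrow> b j" for j
    using cnv[of j] unfolding b_def by (simp add: convergent_LIMSEQ_iff)
  have bb: "cmod (b j) \<le> B * w j" for j
    by (rule Lim_bounded[OF tendsto_norm[OF lim[of j]], of 0]) (use ub in auto)
  have wq: "w j / v j \<le> q ^ j" for j
    using wv[of j] vpos[of j] by (simp add: divide_le_eq)
  have qj: "q ^ j \<le> 1" for j using q by (simp add: power_le_one)
  have bbd: "cmod (b j) / v j \<le> B" for j
  proof -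
    have "cmod (b j) / v j \<le> B * w j / v j" using bb[of j] vpos[of j] by (simp add: divide_right_mono)
    also have "\<dots> = B * (w j / v j)" by simp
    also have "\<dots> \<le> B * q ^ j" using wq B0 by (intro mult_left_mono) auto
    also have "\<dots> \<le> B" using qj[of j] B0 by (simp add: mult_left_le)
    finally show ?thesis .
  qed
  define g where "g n j = cmod (u (d n) j - b j) / v j" for n j
  have gle: "g n j \<le> 2 * B * q ^ j" for n j
  proof -
    have "cmod (u (d n) j - b j) \<le> cmod (u (d n) j) + cmod (b j)" by (rule norm_triangle_ineq4)
    also have "\<dots> \<le> 2 * B * w j" using ub[of "d n" j] bb[of j] by simp
    finally have "g n j \<le> 2 * B * w j / v j" unfolding g_def using vpos[of j] by (simp add: divide_right_mono)
    also have "\<dots> = 2 * B * (w j / v j)" by simp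
    also have "\<dots> \<le> 2 * B * q ^ j" using wq B0 by (intro mult_left_mono) auto
    finally show ?thesis .
  qed
  have g0: "g n j \<ge> 0" for n j unfolding g_def using vpos[of j] by simp
  have gbdd: "bdd_above (range (g n))" for n
    using gle qj B0 by (intro bdd_aboveI[of _ "2 * B"]) (auto, smt (verit) mult_left_le)
  have limg: "(\<lambda>n. SUP j. g n j) \<longlonglongrightarrow> 0"
  proof (rule LIMSEQ_I)
    fix e :: real assume e: "e > 0"
    have lim2: "(\<lambda>j. 2 * B * q ^ j) \<longlonglongrightarrow> 2 * B * 0"
      by (intro tendsto_mult tendsto_const LIMSEQ_power_zero) (use q in auto)
    have e2: "e / 2 > 0" using e by simp
    obtain J where J: "\<And>j. j \<ge> J \<Longrightarrow> norm (2 * B * q ^ j - 2 * B * 0) < e / 2"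
      using LIMSEQ_D[OF lim2 e2] by blast
    have "\<forall>j\<in>{..<J}. \<forall>\<^sub>F n in sequentially. dist (u (d n) j) (b j) < e / 2 * v j"
    proof
      fix j assume "j \<in> {..<J}"
      have "e / 2 * v j > 0" using e vpos[of j] by simp
      then show "\<forall>\<^sub>F n in sequentially. dist (u (d n) j) (b j) < e / 2 * v j"
        by (rule tendstoD[OF lim[of j]])
    qed
    then have "\<forall>\<^sub>F n in sequentially. \<forall>j\<in>{..<J}. dist (u (d n) j) (b j) < e / 2 * v j"
      by (intro eventually_ball_finite) auto
    then obtain N where N: "\<And>n j. n \<ge> N \<Longrightarrow> j < J \<Longrightarrow> dist (u (d n) j) (b j) < e / 2 * v j"
      by (auto simp: eventually_sequentially)
    show "\<exists>N. \<forall>n\<ge>N. norm ((SUP j. g n j) - 0) < e"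
    proof (intro exI allI impI)
      fix n assume n: "n \<ge> N"
      have "(SUP j. g n j) \<le> e / 2"
      proof (rule cSUP_least)
        fix j
        show "g n j \<le> e / 2"
        proof (cases "j < J")
          case True
          then have "cmod (u (d n) j - b j) < e / 2 * v j" using N[OF n True] by (simp add: dist_norm)
          then show ?thesis unfolding g_def using vpos[of j] by (simp add: divide_le_eq)
        next
          case False
          then have "2 * B * q ^ j < e / 2" using J[of j] B0 q by simp
          then show ?thesis using gle[of n j] by simp
        qed
      qed simp
      moreover have "(SUP j. g n j) \<ge> 0"
        by (rule cSUP_upper2[OF gbdd, of 0]) (auto simp: g0)
      ultimately show "norm ((SUP j. g n j) - 0) < e" using e by simp
    qed
  qed
  have bdb: "bdd_above (range (\<lambda>j. cmod (b j) / v j))"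
    using bbd by (intro bdd_aboveI[of _ B]) auto
  have limg': "(\<lambda>n. SUP j. cmod (u (d n) j - b j) / v j) \<longlonglongrightarrow> 0"
    using limg unfolding g_def .
  show ?thesis
    by (intro exI[of _ d] exI[of _ b] conjI subseq bdb limg')
qed

theorem lemmaA2:
  fixes \<sigma> :: "real \<Rightarrow> real" and k :: nat
  assumes "pre_weight \<sigma>" and "k \<ge> 1"
  shows "compact_inclusion \<sigma> k (k + 1)"
proof -
  have wpos: "\<And>j. Lweight \<sigma> k j > 0" using assms(2) by (simp add: Lweight_pos)
  have vpos: "\<And>j. Lweight \<sigma> (k+1) j > 0" by (simp add: Lweight_pos)
  define q where "q = real k / real (k+1)"
  have q: "0 \<le> q" "q < 1" unfolding q_def by auto
  have wv: "\<And>j. Lweight \<sigma> k j \<le> q ^ j * Lweight \<sigma> (k+1) j"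
    unfolding q_def by (rule Lweight_le[OF assms])
  have incl: "Lambda \<sigma> k \<subseteq> Lambda \<sigma> (k + 1)"
  proof
    fix a assume "a \<in> Lambda \<sigma> k"
    then obtain M where M: "\<And>j. cmod (a j) / Lweight \<sigma> k j \<le> M"
      unfolding Lambda_def bdd_above_def by auto
    have "cmod (a j) / Lweight \<sigma> (k+1) j \<le> max M 0" for j
    proof -
      have a: "cmod (a j) \<le> M * Lweight \<sigma> k j" using M[of j] wpos[of j] by (simp add: divide_le_eq)
      have qj: "q ^ j \<le> 1" using q by (simp add: power_le_one)
      have "cmod (a j) \<le> max M 0 * Lweight \<sigma> k j"
        using a wpos[of j] by (smt (verit) mult_right_mono)
      also have "\<dots> \<le> max M 0 * (q ^ j * Lweight \<sigma> (k+1) j)"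
        by (intro mult_left_mono wv) auto
      also have "\<dots> \<le> max M 0 * Lweight \<sigma> (k+1) j"
        using qj vpos[of j] by (intro mult_left_mono) (auto simp: mult_left_le_one_le)
      finally show ?thesis using vpos[of j] by (simp add: divide_le_eq)
    qed
    then show "a \<in> Lambda \<sigma> (k + 1)" unfolding Lambda_def by (intro CollectI bdd_aboveI[of _ "max M 0"]) auto
  qed
  show ?thesis
    unfolding compact_inclusion_def
  proof (intro conjI incl allI impI)
    fix u :: "nat \<Rightarrow> nat \<Rightarrow> complex"
    assume h: "(\<forall>n. u n \<in> Lambda \<sigma> k) \<and> (\<exists>B. \<forall>n. Lnorm \<sigma> k (u n) \<le> B)"
    then obtain B where B: "\<And>n. Lnorm \<sigma> k (u n) \<le> B" by auto
    have ub: "cmod (u n j) \<le> B * Lweight \<sigma> k j" for n j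
    proof -
      have "bdd_above (range (\<lambda>j. cmod (u n j) / Lweight \<sigma> k j))"
        using h unfolding Lambda_def by auto
      then have "cmod (u n j) / Lweight \<sigma> k j \<le> Lnorm \<sigma> k (u n)"
        unfolding Lnorm_def by (rule cSUP_upper[OF UNIV_I])
      then have "cmod (u n j) / Lweight \<sigma> k j \<le> B" using B[of n] by linarith
      then show ?thesis using wpos[of j] by (simp add: divide_le_eq)
    qed
    from compact_gen[where u=u and B=B, OF wpos vpos q wv ub]
    obtain r b where rb: "strict_mono r" "bdd_above (range (\<lambda>j. cmod (b j) / Lweight \<sigma> (k+1) j))"
      "(\<lambda>n. SUP j. cmod (u (r n) j - b j) / Lweight \<sigma> (k+1) j) \<longlonglongrightarrow> 0"
      by (elim exE conjE) (rule that)
    have b: "b \<in> Lambda \<sigma> (k + 1)" unfolding Lambda_def using rb(2) by simp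
    have l: "(\<lambda>n. Lnorm \<sigma> (k + 1) (\<lambda>j. u (r n) j - b j)) \<longlonglongrightarrow> 0"
      unfolding Lnorm_def using rb(3) .
    show "\<exists>r b. strict_mono r \<and> b \<in> Lambda \<sigma> (k + 1) \<and>
               (\<lambda>n. Lnorm \<sigma> (k + 1) (\<lambda>j. u (r n) j - b j)) \<longlonglongrightarrow> 0"
      by (intro exI[of _ r] exI[of _ b] conjI rb(1) b l)
  qed
qed

end
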